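(* Let $\tilde\alpha=(\tilde\alpha_1,\dots,\tilde\alpha_n)\in\mathbb{F}_{2^m}^n$ be a support tuple, let $t$ be a positive integer, and let $C\subseteq\mathbb{F}_2^n$ be a binary Goppa code. Consider the following procedure $\mathrm{GoppaGCD}(\tilde\alpha,t,C)$: (1) Set $\tilde g:=0$ and choose an $\mathbb{F}_2$-basis $B$ of $C$. (2) For each $c\in B$ in turn: set $\hat s_{c,\tilde\alpha}:=\sum_{i\in I_c}\prod_{j\in I_c\setminus\{i\}}(x-\tilde\alpha_j)$ and $\tilde g:=\gcd(\tilde g,\hat s_{c,\tilde\alpha})$; if $\deg(\tilde g)<2t$, return Fail. (3) For $i=1,\dots,n$: while $\tilde g(\tilde\alpha_i)=0$, replace $\tilde g$ by $\tilde g/(x-\tilde\alpha_i)$. (4) If $\deg(\tilde g)<2t$ return Fail; otherwise return $\tilde g$. Then this procedure terminates, and the following are equivalent: (a) $\mathrm{GoppaGCD}(\tilde\alpha,t,C)$ returns a degree-$u$ extension of $\tilde\alpha$ with respect to $C$ for some $u\ge 2t$; (b) $\tilde\alpha$ is degree-$u$ extendable with respect to $C$ for some $u\ge 2t$. Otherwise, the procedure returns Fail.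
   Context: $\mathbb{F}_{2^m}$ is the finite field with $2^m$ elements. A support tuple is $\tilde\alpha\in\mathbb{F}_{2^m}^n$ with pairwise distinct entries. For $c\in\mathbb{F}_2^n$, $I_c=\{i\mid c_i=1\}$. For a support tuple $\alpha$ and a polynomial $g\in\mathbb{F}_{2^m}[x]$ with $g(\alpha_i)\neq 0$ for all $i$ (a Goppa polynomial for $\alpha$), the binary Goppa code is $\Gamma(\alpha,g)=\{c\in\mathbb{F}_2^n\mid \sum_{i\in I_c}(x-\alpha_i)^{-1}=0\text{ in }\mathbb{F}_{2^m}[x]/\langle g\rangle\}$; equivalently $c\in\Gamma(\alpha,g)$ iff $g\mid \sum_{i\in I_c}\prod_{j\in I_c\setminus\{i\}}(x-\alpha_j)$. A binary Goppa code is a code of the form $\Gamma(\alpha,g)$. For $u\in\mathbb{N}_+$, a degree-$u$ extension of $\tilde\alpha$ with respect to $C$ is a Goppa polynomial $\tilde g$ for $\tilde\alpha$ with $\deg\tilde g=u$ and $C\subseteq\Gamma(\tilde\alpha,\tilde g)$; $\tilde\alpha$ is degree-$u$ extendable with respect to $C$ if such an extension exists. The gcd is taken as the monic gcd, with $\gcd(0,h)$ the monic associate of $h$. *)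

theory Defs
  imports "HOL-Computational_Algebra.Polynomial" "HOL-Computational_Algebra.Polynomial_Factorial" "HOL-Computational_Algebra.Euclidean_Algorithm"
          "HOL-Library.Z2" "HOL-Library.Cardinality" "HOL-Library.While_Combinator"
begin

text \<open>Binary vectors of length n: functions nat to bit vanishing outside the indices 0..n-1.
  Support tuples: alpha :: nat to field, injective on 0..n-1 (index i of the paper is i-1 here).\<close>

definition F2vecs :: "nat \<Rightarrow> (nat \<Rightarrow> bit) set" where
  "F2vecs n = {c. \<forall>i\<ge>n. c i = 0}"

definition support_tuple :: "nat \<Rightarrow> (nat \<Rightarrow> 'a) \<Rightarrow> bool" where
  "support_tuple n \<alpha> \<longleftrightarrow> inj_on \<alpha> {..<n}"

definition Ic :: "nat \<Rightarrow> (nat \<Rightarrow> bit) \<Rightarrow> nat set" where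
  "Ic n c = {i. i < n \<and> c i = 1}"

definition shat :: "nat \<Rightarrow> (nat \<Rightarrow> 'a::field) \<Rightarrow> (nat \<Rightarrow> bit) \<Rightarrow> 'a poly" where
  "shat n \<alpha> c = (\<Sum>i\<in>Ic n c. \<Prod>j\<in>Ic n c - {i}. [:- \<alpha> j, 1:])"

definition goppa_poly :: "nat \<Rightarrow> (nat \<Rightarrow> 'a::field) \<Rightarrow> 'a poly \<Rightarrow> bool" where
  "goppa_poly n \<alpha> g \<longleftrightarrow> (\<forall>i<n. poly g (\<alpha> i) \<noteq> 0)"

definition goppa_code :: "nat \<Rightarrow> (nat \<Rightarrow> 'a::field) \<Rightarrow> 'a poly \<Rightarrow> (nat \<Rightarrow> bit) set" where
  "goppa_code n \<alpha> g = {c \<in> F2vecs n. g dvd shat n \<alpha> c}"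

definition binary_goppa_code :: "nat \<Rightarrow> (nat \<Rightarrow> bit) set \<Rightarrow> ('a::field) itself \<Rightarrow> bool" where
  "binary_goppa_code n C _ \<longleftrightarrow>
     (\<exists>(\<alpha> :: nat \<Rightarrow> 'a) g. support_tuple n \<alpha> \<and> goppa_poly n \<alpha> g \<and> C = goppa_code n \<alpha> g)"

definition is_extension :: "nat \<Rightarrow> (nat \<Rightarrow> 'a::field) \<Rightarrow> (nat \<Rightarrow> bit) set \<Rightarrow> nat \<Rightarrow> 'a poly \<Rightarrow> bool" where
  "is_extension n \<alpha> C u g \<longleftrightarrow> goppa_poly n \<alpha> g \<and> degree g = u \<and> C \<subseteq> goppa_code n \<alpha> g"

definition extendable :: "nat \<Rightarrow> (nat \<Rightarrow> 'a::field) \<Rightarrow> (nat \<Rightarrow> bit) set \<Rightarrow> nat \<Rightarrow> bool" where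
  "extendable n \<alpha> C u \<longleftrightarrow> (\<exists>g. is_extension n \<alpha> C u g)"

definition lin_comb :: "(nat \<Rightarrow> bit) list \<Rightarrow> (nat \<Rightarrow> bit) \<Rightarrow> (nat \<Rightarrow> bit)" where
  "lin_comb B a = (\<lambda>j. \<Sum>i<length B. a i * (B ! i) j)"

definition F2_basis :: "(nat \<Rightarrow> bit) set \<Rightarrow> (nat \<Rightarrow> bit) list \<Rightarrow> bool" where
  "F2_basis C B \<longleftrightarrow>
     (\<forall>a. lin_comb B a = (\<lambda>_. 0) \<longrightarrow> (\<forall>i<length B. a i = 0)) \<and>
     C = range (lin_comb B)"

datatype 'a result = Fail | Return 'a

text \<open>Step 2: gcd loop over the basis; None means the procedure returned Fail.\<close>
fun gcd_loop :: "nat \<Rightarrow> nat \<Rightarrow> (nat \<Rightarrow> 'a::field_gcd) \<Rightarrow> 'a poly \<Rightarrow> (nat \<Rightarrow> bit) list \<Rightarrow> 'a poly option" where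
  "gcd_loop n t \<alpha> g [] = Some g"
| "gcd_loop n t \<alpha> g (c # cs) =
     (let g' = gcd g (shat n \<alpha> c) in
      if degree g' < 2 * t then None else gcd_loop n t \<alpha> g' cs)"

text \<open>Step 3: the while loops (None = non-termination).\<close>
definition strip_root :: "'a::field \<Rightarrow> 'a poly \<Rightarrow> 'a poly option" where
  "strip_root a g = while_option (\<lambda>h. poly h a = 0) (\<lambda>h. h div [:- a, 1:]) g"

definition strip_all :: "nat \<Rightarrow> (nat \<Rightarrow> 'a::field) \<Rightarrow> 'a poly \<Rightarrow> 'a poly option" where
  "strip_all n \<alpha> g = fold (\<lambda>i og. Option.bind og (strip_root (\<alpha> i))) [0..<n] (Some g)"

text \<open>The whole procedure GoppaGCD. Outer None = does not terminate;
  Some Fail = returns Fail; Some (Return g) = returns g.\<close>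
definition goppa_gcd :: "nat \<Rightarrow> (nat \<Rightarrow> 'a::field_gcd) \<Rightarrow> nat \<Rightarrow> (nat \<Rightarrow> bit) list \<Rightarrow> 'a poly result option" where
  "goppa_gcd n \<alpha> t B =
     (case gcd_loop n t \<alpha> 0 B of
        None \<Rightarrow> Some Fail
      | Some g \<Rightarrow>
          (case strip_all n \<alpha> g of
             None \<Rightarrow> None
           | Some g' \<Rightarrow> Some (if degree g' < 2 * t then Fail else Return g')))"

end

theory Submission imports Defs "HOL-Number_Theory.Residues" begin

lemma char2:
  assumes "CARD('a::{field,finite}) = 2 ^ m"
  shows "(1::'a) + 1 = 0"
proof -
  have "CHAR('a) > 0" by (rule finite_imp_CHAR_pos) simp
  hence p: "prime CHAR('a)" by (rule prime_CHAR_semidom)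
  have "CHAR('a) dvd 2 ^ m" using CHAR_dvd_CARD[where 'a='a] assms by simp
  hence "CHAR('a) dvd 2" using p prime_dvd_power by blast
  hence "CHAR('a) = 2" using p primes_dvd_imp_eq two_is_prime_nat by blast
  hence "of_nat 2 = (0::'a)" by (metis of_nat_CHAR)
  thus ?thesis by simp
qed

lemma strip_root_prop:
  fixes h :: "'a::field_gcd poly"
  assumes "h \<noteq> 0"
  shows "\<exists>h'. strip_root a h = Some h' \<and> h' \<noteq> 0 \<and> h' dvd h \<and> poly h' a \<noteq> 0 \<and>
     (\<forall>b. poly h b \<noteq> 0 \<longrightarrow> poly h' b \<noteq> 0) \<and>
     (\<forall>g. poly g a \<noteq> 0 \<longrightarrow> g dvd h \<longrightarrow> g dvd h')"
proof -
  define P where "P = (\<lambda>k::'a poly. k \<noteq> 0 \<and> k dvd h \<and>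
     (\<forall>b. poly h b \<noteq> 0 \<longrightarrow> poly k b \<noteq> 0) \<and>
     (\<forall>g. poly g a \<noteq> 0 \<longrightarrow> g dvd h \<longrightarrow> g dvd k))"
  have step: "P (k div [:-a,1:]) \<and> degree (k div [:-a,1:]) < degree k" if "P k" "poly k a = 0" for k
  proof -
    from that(2) have "[:-a,1:] dvd k" by (simp add: poly_eq_0_iff_dvd)
    then obtain q where kq: "k = [:-a,1:] * q" by blast
    have qd: "k div [:-a,1:] = q" unfolding kq by (rule nonzero_mult_div_cancel_left) simp
    have q0: "q \<noteq> 0" using that(1) kq unfolding P_def by auto
    have dq0: "degree k = degree [:-a,1:] + degree q" unfolding kq using q0 by (intro degree_mult_eq) auto
    hence dq: "degree k = degree q + 1" by simp
    have "q dvd h" using that(1) kq unfolding P_def by (metis dvd_mult_right dvd_trans)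
    moreover have "poly q b \<noteq> 0" if "poly h b \<noteq> 0" for b
      using \<open>P k\<close> that kq unfolding P_def by auto
    moreover have "g dvd q" if "poly g a \<noteq> 0" "g dvd h" for g
    proof -
      have "g dvd k" using \<open>P k\<close> that unfolding P_def by auto
      have "coprime g [:-a,1:]"
        using prime_elem_imp_coprime[OF prime_elem_linear_field_poly[of 1 "-a"], of g] that(1)
        by (simp add: poly_eq_0_iff_dvd coprime_commute)
      moreover have "g dvd q * [:-a,1:]" using \<open>g dvd k\<close> kq by (simp only: mult.commute)
      ultimately show ?thesis using coprime_dvd_mult_left_iff by blast
    qed
    ultimately show ?thesis using q0 dq qd unfolding P_def by auto
  qed
  have P0: "P h" unfolding P_def using assms by auto
  obtain h' where w: "while_option (\<lambda>k. poly k a = 0) (\<lambda>k. k div [:- a, 1:]) h = Some h'"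
    using measure_while_option_Some[of P "\<lambda>k. poly k a = 0" "\<lambda>k. k div [:- a, 1:]" degree h] step P0
    by blast
  have "P h'" using while_option_rule[of P, OF _ w] step P0 by blast
  moreover have "poly h' a \<noteq> 0" using while_option_stop[OF w] by simp
  ultimately show ?thesis using w unfolding strip_root_def P_def by auto
qed

lemma strip_fold_prop:
  fixes h :: "'a::field_gcd poly"
  assumes "h \<noteq> 0"
  shows "\<exists>h'. fold (\<lambda>i og. Option.bind og (strip_root (\<alpha> i))) xs (Some h) = Some h' \<and> h' \<noteq> 0 \<and> h' dvd h \<and>
     (\<forall>i\<in>set xs. poly h' (\<alpha> i) \<noteq> 0) \<and>
     (\<forall>b. poly h b \<noteq> 0 \<longrightarrow> poly h' b \<noteq> 0) \<and>
     (\<forall>g. (\<forall>i\<in>set xs. poly g (\<alpha> i) \<noteq> 0) \<longrightarrow> g dvd h \<longrightarrow> g dvd h')"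
  using assms
proof (induction xs arbitrary: h)
  case Nil thus ?case by simp
next
  case (Cons x xs)
  obtain h1 where h1: "strip_root (\<alpha> x) h = Some h1" "h1 \<noteq> 0" "h1 dvd h" "poly h1 (\<alpha> x) \<noteq> 0"
     "\<forall>b. poly h b \<noteq> 0 \<longrightarrow> poly h1 b \<noteq> 0"
     "\<forall>g. poly g (\<alpha> x) \<noteq> 0 \<longrightarrow> g dvd h \<longrightarrow> g dvd h1"
    using strip_root_prop[OF Cons.prems] by blast
  obtain h' where h': "fold (\<lambda>i og. Option.bind og (strip_root (\<alpha> i))) xs (Some h1) = Some h'" "h' \<noteq> 0" "h' dvd h1"
     "\<forall>i\<in>set xs. poly h' (\<alpha> i) \<noteq> 0"
     "\<forall>b. poly h1 b \<noteq> 0 \<longrightarrow> poly h' b \<noteq> 0"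
     "\<forall>g. (\<forall>i\<in>set xs. poly g (\<alpha> i) \<noteq> 0) \<longrightarrow> g dvd h1 \<longrightarrow> g dvd h'"
    using Cons.IH[OF h1(2)] by blast
  show ?case
    apply (rule exI[of _ h'])
    using h1 h' by (auto intro: dvd_trans)
qed

lemma gcd_loop_Some:
  "gcd_loop n t \<alpha> g cs = Some G \<Longrightarrow> G dvd g \<and> (\<forall>c\<in>set cs. G dvd shat n \<alpha> c) \<and>
     (cs \<noteq> [] \<longrightarrow> 2 * t \<le> degree G) \<and> (\<forall>h. h dvd g \<longrightarrow> (\<forall>c\<in>set cs. h dvd shat n \<alpha> c) \<longrightarrow> h dvd G)"
proof (induction cs arbitrary: g)
  case Nil thus ?case by simp
next
  case (Cons c cs)
  let ?g' = "gcd g (shat n \<alpha> c)"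
  have d: "\<not> degree ?g' < 2 * t" and r: "gcd_loop n t \<alpha> ?g' cs = Some G"
    using Cons.prems by (auto simp: Let_def split: if_splits)
  note IH = Cons.IH[OF r]
  show ?case using IH d r
    by (cases cs; auto intro: dvd_trans simp: not_less)
qed

lemma gcd_loop_ext:
  assumes "2 * t \<le> degree gt" "t > 0" "gt dvd g" "\<forall>c\<in>set cs. gt dvd shat n \<alpha> c \<and> shat n \<alpha> c \<noteq> 0"
  shows "gcd_loop n t \<alpha> g cs \<noteq> None"
  using assms(3,4)
proof (induction cs arbitrary: g)
  case Nil thus ?case by simp
next
  case (Cons c cs)
  let ?g' = "gcd g (shat n \<alpha> c)"
  have "?g' \<noteq> 0" using Cons.prems by auto
  moreover have "gt dvd ?g'" using Cons.prems by auto
  ultimately have "degree gt \<le> degree ?g'" by (rule dvd_imp_degree_le[rotated])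
  hence "\<not> degree ?g' < 2 * t" using assms(1) by simp
  thus ?case using Cons by (simp add: Let_def)
qed

definition qq :: "nat \<Rightarrow> (nat \<Rightarrow> 'a::field) \<Rightarrow> nat \<Rightarrow> 'a poly" where
  "qq n \<alpha> j = (\<Prod>k\<in>{..<n}-{j}. [:-\<alpha> k,1:])"

definition phi :: "bit \<Rightarrow> 'a::field" where
  "phi b = (if b = 0 then 0 else 1)"

definition TT :: "nat \<Rightarrow> (nat \<Rightarrow> 'a::field) \<Rightarrow> (nat \<Rightarrow> bit) \<Rightarrow> 'a poly" where
  "TT n \<alpha> c = (\<Sum>j<n. Polynomial.smult (phi (c j)) (qq n \<alpha> j))"

lemma shat_mult:
  "shat n \<alpha> c * (\<Prod>k\<in>{..<n} - Ic n c. [:-\<alpha> k,1:]) = TT n \<alpha> c"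
proof -
  let ?I = "Ic n c"
  have I: "?I \<subseteq> {..<n}" unfolding Ic_def by auto
  have "shat n \<alpha> c * (\<Prod>k\<in>{..<n} - ?I. [:-\<alpha> k,1:]) =
     (\<Sum>i\<in>?I. (\<Prod>j\<in>?I - {i}. [:-\<alpha> j,1:]) * (\<Prod>k\<in>{..<n} - ?I. [:-\<alpha> k,1:]))"
    unfolding shat_def by (simp add: sum_distrib_right)
  also have "\<dots> = (\<Sum>i\<in>?I. qq n \<alpha> i)"
  proof (rule sum.cong[OF refl])
    fix i assume "i \<in> ?I"
    hence e: "{..<n} - {i} = (?I - {i}) \<union> ({..<n} - ?I)" using I by auto
    have "finite (?I - {i})" using I by (meson finite_Diff finite_lessThan finite_subset)
    then show "(\<Prod>j\<in>?I - {i}. [:-\<alpha> j,1:]) * (\<Prod>k\<in>{..<n} - ?I. [:-\<alpha> k,1:]) = qq n \<alpha> i"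
      unfolding qq_def e by (subst prod.union_disjoint) auto
  qed
  also have "\<dots> = (\<Sum>j<n. if c j = 1 then qq n \<alpha> j else 0)"
    unfolding Ic_def by (subst sum.inter_filter[symmetric]) (auto simp: lessThan_def)
  also have "\<dots> = TT n \<alpha> c" unfolding TT_def phi_def by (rule sum.cong) auto
  finally show ?thesis .
qed

lemma coprime_lin:
  fixes g :: "'a::field_gcd poly"
  assumes "poly g a \<noteq> 0" shows "coprime g [:-a,1:]"
  using prime_elem_imp_coprime[OF prime_elem_linear_field_poly[of 1 "-a"], of g] assms
  by (simp add: poly_eq_0_iff_dvd coprime_commute)

lemma shat_dvd_iff:
  fixes g :: "'a::field_gcd poly"
  assumes "goppa_poly n \<alpha> g"
  shows "g dvd shat n \<alpha> c \<longleftrightarrow> g dvd TT n \<alpha> c"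
proof -
  have "coprime g (\<Prod>k\<in>{..<n} - Ic n c. [:-\<alpha> k,1:])"
    by (rule prod_coprime_right, rule coprime_lin) (use assms in \<open>auto simp: goppa_poly_def\<close>)
  thus ?thesis using coprime_dvd_mult_left_iff shat_mult by metis
qed

lemma phi_add:
  assumes "(1::'a::field) + 1 = 0"
  shows "(phi (x + y) :: 'a) = phi x + phi y"
  using assms by (cases x; cases y) (auto simp: phi_def)

lemma phi_mult: "(phi (x * y) :: 'a::field) = phi x * phi y"
  by (cases x; cases y) (auto simp: phi_def)

lemma smult_sum2': "Polynomial.smult a (sum f A) = (\<Sum>i\<in>A. Polynomial.smult a (f i))"
  by (induct A rule: infinite_finite_induct) (simp_all add: smult_add_right)

lemma TT_lin:
  assumes "(1::'a::field) + 1 = 0"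
  shows "TT n (\<alpha>::nat \<Rightarrow> 'a) (lin_comb B a) = (\<Sum>i<length B. Polynomial.smult (phi (a i)) (TT n \<alpha> (B!i)))"
proof -
  have ph: "(phi (\<Sum>i<length B. a i * (B!i) j) :: 'a) = (\<Sum>i<length B. phi (a i) * phi ((B!i) j))" for j
  proof -
    have "(phi (\<Sum>i<length B. a i * (B!i) j) :: 'a) = sum (phi \<circ> (\<lambda>i. a i * (B!i) j)) {..<length B}"
      by (rule sum_comp_morphism[symmetric]) (simp add: phi_def, rule phi_add[OF assms])
    also have "\<dots> = (\<Sum>i<length B. phi (a i) * phi ((B!i) j))"
      by (rule sum.cong) (simp_all only: o_apply phi_mult)
    finally show ?thesis .
  qed
  have "TT n \<alpha> (lin_comb B a) = (\<Sum>j<n. \<Sum>i<length B. Polynomial.smult (phi (a i)) (Polynomial.smult (phi ((B!i) j)) (qq n \<alpha> j)))"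
    unfolding TT_def lin_comb_def ph by (simp add: smult_sum)
  also have "\<dots> = (\<Sum>i<length B. \<Sum>j<n. Polynomial.smult (phi (a i)) (Polynomial.smult (phi ((B!i) j)) (qq n \<alpha> j)))"
    by (rule sum.swap)
  also have "\<dots> = (\<Sum>i<length B. Polynomial.smult (phi (a i)) (TT n \<alpha> (B!i)))"
    unfolding TT_def by (simp add: smult_sum2')
  finally show ?thesis .
qed

lemma dvd_lin_comb:
  fixes g :: "'a::field_gcd poly"
  assumes "(1::'a) + 1 = 0" "goppa_poly n \<alpha> g" "\<forall>i<length B. g dvd shat n \<alpha> (B!i)"
  shows "g dvd shat n \<alpha> (lin_comb B a)"
proof -
  have "\<forall>i<length B. g dvd TT n \<alpha> (B!i)" using assms(3) shat_dvd_iff[OF assms(2)] by blast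
  hence "g dvd (\<Sum>i<length B. Polynomial.smult (phi (a i)) (TT n \<alpha> (B!i)))"
    by (intro dvd_sum) (auto intro: dvd_smult)
  thus ?thesis using TT_lin[OF assms(1)] shat_dvd_iff[OF assms(2)] by metis
qed

lemma shat_nonzero:
  fixes \<alpha> :: "nat \<Rightarrow> 'a::field"
  assumes "inj_on \<alpha> {..<n}" "k \<in> Ic n c"
  shows "shat n \<alpha> c \<noteq> 0"
proof -
  let ?I = "Ic n c"
  have I: "?I \<subseteq> {..<n}" unfolding Ic_def by auto
  have fin: "finite ?I" using I finite_subset by blast
  have "poly (shat n \<alpha> c) (\<alpha> k) = (\<Sum>i\<in>?I. \<Prod>j\<in>?I - {i}. \<alpha> k - \<alpha> j)"
    unfolding shat_def by (simp add: poly_sum poly_prod)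
  also have "\<dots> = (\<Prod>j\<in>?I - {k}. \<alpha> k - \<alpha> j)"
  proof (subst sum.remove[OF fin assms(2)], subst sum.neutral)
    show "\<forall>i\<in>?I - {k}. (\<Prod>j\<in>?I - {i}. \<alpha> k - \<alpha> j) = 0"
      using fin assms(2) by (auto simp: prod_zero_iff)
  qed simp
  also have "\<dots> \<noteq> 0"
    using fin assms I by (auto simp: prod_zero_iff inj_on_def)
  finally show ?thesis by auto
qed

theorem proposition6p8:
  fixes \<alpha> :: "nat \<Rightarrow> 'a::{field_gcd, finite}" and n m t :: nat
    and C :: "(nat \<Rightarrow> bit) set" and B :: "(nat \<Rightarrow> bit) list"
  assumes card: "CARD('a) = 2 ^ m"
    and supp: "support_tuple n \<alpha>"
    and tpos: "t > 0"
    and goppa: "binary_goppa_code n C TYPE('a)"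
    and nonzero: "C \<noteq> {\<lambda>_. 0}"
    and basis: "F2_basis C B"
  shows "goppa_gcd n \<alpha> t B \<noteq> None \<and>
         ((\<exists>u\<ge>2 * t. \<exists>g. goppa_gcd n \<alpha> t B = Some (Return g) \<and> is_extension n \<alpha> C u g)
            \<longleftrightarrow> (\<exists>u\<ge>2 * t. extendable n \<alpha> C u)) \<and>
         (\<not> (\<exists>u\<ge>2 * t. \<exists>g. goppa_gcd n \<alpha> t B = Some (Return g) \<and> is_extension n \<alpha> C u g)
            \<longrightarrow> goppa_gcd n \<alpha> t B = Some Fail)"
proof -
  have c2: "(1::'a) + 1 = 0" by (rule char2[OF card])
  have indep: "\<And>a. lin_comb B a = (\<lambda>_. 0) \<Longrightarrow> \<forall>i<length B. a i = 0"
    and Cr: "C = range (lin_comb B)" using basis unfolding F2_basis_def by auto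
  obtain \<alpha>' :: "nat \<Rightarrow> 'a" and g0 where "C = goppa_code n \<alpha>' g0"
    using goppa unfolding binary_goppa_code_def by blast
  hence CF: "C \<subseteq> F2vecs n" unfolding goppa_code_def by auto
  have Bne: "B \<noteq> []"
  proof
    assume "B = []"
    hence "C = {\<lambda>_. 0}" using Cr by (auto simp: lin_comb_def)
    thus False using nonzero by simp
  qed
  have Bgood: "c \<in> C \<and> shat n \<alpha> c \<noteq> 0" if "c \<in> set B" for c
  proof -
    obtain i where i: "i < length B" "c = B!i" using \<open>c \<in> set B\<close> by (auto simp: in_set_conv_nth)
    define e where "e = (\<lambda>k. if k = i then (1::bit) else 0)"
    have le: "lin_comb B e = B!i"
    proof
      fix j
      have "(\<Sum>k<length B. e k * (B!k) j) = (\<Sum>k<length B. if k = i then (B!k) j else 0)"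
        by (rule sum.cong) (auto simp: e_def)
      thus "lin_comb B e j = (B!i) j" unfolding lin_comb_def using i(1) by simp
    qed
    have cC: "c \<in> C" using Cr le i by (metis rangeI)
    have "c \<noteq> (\<lambda>_. 0)"
    proof
      assume "c = (\<lambda>_. 0)"
      hence "e i = 0" using indep[of e] le i by auto
      thus False by (simp add: e_def)
    qed
    then obtain j where "c j \<noteq> 0" by (meson ext)
    moreover have "c \<in> F2vecs n" using cC CF by auto
    ultimately have "j \<in> Ic n c" unfolding F2vecs_def Ic_def by (auto simp: not_le[symmetric])
    hence "shat n \<alpha> c \<noteq> 0" using shat_nonzero supp unfolding support_tuple_def by blast
    thus ?thesis using cC by simp
  qed
  have extdvd: "gt dvd shat n \<alpha> c" if "is_extension n \<alpha> C u gt" "c \<in> C" for gt u c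
    using that unfolding is_extension_def goppa_code_def by auto
  show ?thesis
  proof (cases "gcd_loop n t \<alpha> 0 B")
    case None
    have res: "goppa_gcd n \<alpha> t B = Some Fail" unfolding goppa_gcd_def None by simp
    have "\<not> (\<exists>u\<ge>2 * t. extendable n \<alpha> C u)"
    proof
      assume "\<exists>u\<ge>2 * t. extendable n \<alpha> C u"
      then obtain u gt where u: "u \<ge> 2 * t" "is_extension n \<alpha> C u gt"
        unfolding extendable_def by blast
      have "gcd_loop n t \<alpha> 0 B \<noteq> None"
        by (rule gcd_loop_ext[of t gt]) (use u tpos Bgood extdvd in \<open>auto simp: is_extension_def\<close>)
      thus False using None by simp
    qed
    thus ?thesis using res by simp
  next
    case (Some G)
    note GS = gcd_loop_Some[OF Some]
    have G0: "G \<noteq> 0" using GS Bne tpos by auto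
    obtain G' where G': "strip_all n \<alpha> G = Some G'" "G' \<noteq> 0" "G' dvd G"
      "\<forall>i\<in>set [0..<n]. poly G' (\<alpha> i) \<noteq> 0"
      "\<forall>g. (\<forall>i\<in>set [0..<n]. poly g (\<alpha> i) \<noteq> 0) \<longrightarrow> g dvd G \<longrightarrow> g dvd G'"
      using strip_fold_prop[OF G0, of \<alpha> "[0..<n]"] unfolding strip_all_def by blast
    have res: "goppa_gcd n \<alpha> t B = Some (if degree G' < 2 * t then Fail else Return G')"
      by (simp add: goppa_gcd_def Some G'(1))
    have gp: "goppa_poly n \<alpha> G'" using G'(4) unfolding goppa_poly_def by auto
    have "\<forall>i<length B. G' dvd shat n \<alpha> (B!i)" using GS G'(3) by (auto intro: dvd_trans)
    hence "G' dvd shat n \<alpha> c" if "c \<in> C" for c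
      using dvd_lin_comb[OF c2 gp] that Cr by blast
    hence ext: "is_extension n \<alpha> C (degree G') G'"
      using gp CF unfolding is_extension_def goppa_code_def by auto
    have big: "2 * t \<le> degree G'" if ex: "\<exists>u\<ge>2 * t. extendable n \<alpha> C u"
    proof -
      obtain u gt where u: "u \<ge> 2 * t" "is_extension n \<alpha> C u gt"
        using ex unfolding extendable_def by blast
      have "gt dvd G" using GS Bgood extdvd[OF u(2)] by auto
      moreover have "\<forall>i\<in>set [0..<n]. poly gt (\<alpha> i) \<noteq> 0" using u(2)
        unfolding is_extension_def goppa_poly_def by auto
      ultimately have "gt dvd G'" using G'(5) by blast
      hence "degree gt \<le> degree G'" using G'(2) by (rule dvd_imp_degree_le)
      thus ?thesis using u unfolding is_extension_def by auto
    qed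
    show ?thesis
    proof (cases "degree G' < 2 * t")
      case True
      thus ?thesis using res big by auto
    next
      case False
      hence r2: "goppa_gcd n \<alpha> t B = Some (Return G')" using res by simp
      have "2 * t \<le> degree G'" using False by simp
      hence "\<exists>u\<ge>2 * t. \<exists>g. goppa_gcd n \<alpha> t B = Some (Return g) \<and> is_extension n \<alpha> C u g"
        using r2 ext by blast
      thus ?thesis unfolding extendable_def by blast
    qed
  qed
qed

end
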